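(* Let $\vec d=(\vec a,\vec b)$ be a bidegree sequence of length $n$ with $\sum_i a_i=\sum_i b_i=n\bar c$, and let $M=\max\vec d$ with $M<n$. (i) If $k:=\#\{i: a_i=M\}$ satisfies $M<k$, then $\vec d$ is graphic. (ii) More generally, if there is $k\in\mathbb{N}$ with $M<k$ and $Mk\le n\bar c$, then $\vec d$ is graphic.
   Context: A bidegree sequence of length $n$ is a pair $\vec d=(\vec a,\vec b)$ with $\vec a=(a_1,\dots,a_n)\in\mathbb{N}_0^n$ and $\vec b=(b_1,\dots,b_n)\in\mathbb{N}_0^n$. It is graphic with loops if there is an $n\times n$ matrix with entries in $\{0,1\}$ whose $i$th row sum is $a_i$ and whose $i$th column sum is $b_i$ for every $i\in[1..n]$; it is graphic if such a matrix exists with all diagonal entries equal to $0$. $\max\vec d$ and $\min\vec d$ denote the maximum and minimum over all $2n$ entries $a_1,\dots,a_n,b_1,\dots,b_n$. The number $\bar c$ (the average degree) is defined by $\sum_i a_i=\sum_i b_i=n\bar c$. *)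

theory Defs
  imports Main
begin

(* A bidegree sequence of length n is a pair of functions a b :: nat => nat,
   only the values at indices 0..n-1 matter. *)

definition graphic_with_loops :: "nat \<Rightarrow> (nat \<Rightarrow> nat) \<Rightarrow> (nat \<Rightarrow> nat) \<Rightarrow> bool" where
  "graphic_with_loops n a b \<longleftrightarrow>
     (\<exists>A :: nat \<Rightarrow> nat \<Rightarrow> nat.
        (\<forall>i<n. \<forall>j<n. A i j \<in> {0, 1}) \<and>
        (\<forall>i<n. (\<Sum>j<n. A i j) = a i) \<and>
        (\<forall>j<n. (\<Sum>i<n. A i j) = b j))"

definition graphic :: "nat \<Rightarrow> (nat \<Rightarrow> nat) \<Rightarrow> (nat \<Rightarrow> nat) \<Rightarrow> bool" where
  "graphic n a b \<longleftrightarrow>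
     (\<exists>A :: nat \<Rightarrow> nat \<Rightarrow> nat.
        (\<forall>i<n. \<forall>j<n. A i j \<in> {0, 1}) \<and>
        (\<forall>i<n. A i i = 0) \<and>
        (\<forall>i<n. (\<Sum>j<n. A i j) = a i) \<and>
        (\<forall>j<n. (\<Sum>i<n. A i j) = b j))"

definition max_bideg :: "nat \<Rightarrow> (nat \<Rightarrow> nat) \<Rightarrow> (nat \<Rightarrow> nat) \<Rightarrow> nat" where
  "max_bideg n a b = Max (a ` {..<n} \<union> b ` {..<n})"

end

theory Submission
  imports Defs
begin

lemma arith_contra:
  fixes SX BY BZ P w x z M S :: nat
  assumes "SX \<ge> BY + P + 1" "P + w = x * z" "SX \<le> x * M" "SX \<le> S"
    "BY + BZ = S" "BZ \<le> z * M" "M * (M + 1) \<le> S" "w \<le> x" "w \<le> z"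
  shows False
proof (cases "z \<ge> M + 1")
  case True
  have "x * (M+1) \<le> x * z" using True by (intro mult_left_mono) simp_all
  then show False using assms by (simp add: algebra_simps)
next
  case False
  hence z: "z \<le> M" by simp
  have bz: "BZ \<ge> P + 1" using assms by linarith
  show False
  proof (cases "x \<ge> M + 1")
    case True
    have "(M+1) * z \<le> x * z" using True by (rule mult_right_mono) simp
    then show False using assms bz by (simp add: algebra_simps)
  next
    case False
    hence x: "x \<le> M" by simp
    have "0 \<le> (int M - int x) * (int M - int z)" using x z by simp
    hence h1: "int M * int M + int x * int z \<ge> int M * int x + int M * int z"
      by (simp add: algebra_simps)
    have h2: "int SX \<le> int x * int M" "int BZ \<le> int z * int M" "int M * int M + int M \<le> int S"
       "int P + int w = int x * int z"
      using assms(3,6,7,2) by (simp_all add: algebra_simps flip: of_nat_mult of_nat_add)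
    have h3: "int SX \<ge> int BY + int P + 1" "int BY + int BZ = int S" "int w \<le> int x" "int x \<le> int M"
      using assms x by simp_all
    have "int x * int M = int M * int x" "int z * int M = int M * int z" by simp_all
    then show False using h1 h2 h3 by linarith
  qed
qed


locale aug =
  fixes n :: nat and A :: "nat \<Rightarrow> nat \<Rightarrow> nat" and a :: "nat \<Rightarrow> nat"
  assumes ent: "\<And>i j. i < n \<Longrightarrow> j < n \<Longrightarrow> A i j \<le> 1"
    and dg: "\<And>i. i < n \<Longrightarrow> A i i = 0"
begin

definition rs where "rs i = (\<Sum>j<n. A i j)"
definition cs where "cs j = (\<Sum>i<n. A i j)"

primrec RL :: "nat \<Rightarrow> nat set" where
  "RL 0 = {i. i < n \<and> rs i < a i}"
| "RL (Suc k) = RL k \<union> {i. i < n \<and> (\<exists>j<n. (\<exists>i'\<in>RL k. i' \<noteq> j \<and> A i' j = 0) \<and> A i j = 1)}"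

definition CL where "CL k = {j. j < n \<and> (\<exists>i\<in>RL k. i \<noteq> j \<and> A i j = 0)}"

lemma RL_sub: "RL k \<subseteq> {..<n}"
  by (induction k) auto

lemma RL_mono: "k \<le> l \<Longrightarrow> RL k \<subseteq> RL l"
proof (induction l)
  case 0 then show ?case by simp
next
  case (Suc l) then show ?case by (cases "k = Suc l") auto
qed

lemma RL_Suc: "i \<in> RL (Suc k) \<Longrightarrow> i \<notin> RL k \<Longrightarrow> \<exists>j\<in>CL k. A i j = 1"
  unfolding CL_def by auto

lemma path:
  "j \<in> CL k \<Longrightarrow> \<exists>A' i0. i0 \<in> RL 0 \<and> (\<forall>i<n. \<forall>j<n. A' i j \<le> 1) \<and> (\<forall>i<n. A' i i = 0)
     \<and> (\<forall>i<n. (\<Sum>l<n. A' i l) = rs i + (if i = i0 then 1 else 0))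
     \<and> (\<forall>l<n. (\<Sum>i<n. A' i l) = cs l + (if l = j then 1 else 0))
     \<and> (\<forall>i<n. i \<notin> RL k \<longrightarrow> (\<forall>l<n. A' i l = A i l))"
proof (induction k arbitrary: j)
  case 0
  then obtain i where i: "i \<in> RL 0" "i \<noteq> j" "A i j = 0" "j < n" unfolding CL_def by auto
  have "i < n" using i RL_sub by auto
  define A' where "A' = (\<lambda>p q. if p = i \<and> q = j then 1 else A p q)"
  have s: "A' p q = A p q + (if q = j then (if p = i then 1 else 0) else 0)" for p q
    using i unfolding A'_def by auto
  have s2: "A' p q = A p q + (if p = i then (if q = j then 1 else 0) else 0)" for p q
    using i unfolding A'_def by auto
  show ?case
  proof (intro exI[of _ A'] exI[of _ i] conjI allI impI)
    show "i \<in> RL 0" by fact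
  next
    fix p q assume "p < n" "q < n" then show "A' p q \<le> 1" using ent unfolding A'_def by auto
  next
    fix p assume "p < n" then show "A' p p = 0" using dg i unfolding A'_def by auto
  next
    fix p assume "p < n"
    show "(\<Sum>l<n. A' p l) = rs p + (if p = i then 1 else 0)"
      unfolding s2 sum.distrib rs_def using \<open>j < n\<close> by (cases "p = i") simp_all
  next
    fix l assume "l < n"
    show "(\<Sum>p<n. A' p l) = cs l + (if l = j then 1 else 0)"
      unfolding s sum.distrib cs_def using \<open>i < n\<close> by (cases "l = j") simp_all
  next
    fix p l assume "p < n" "p \<notin> RL 0" "l < n"
    then show "A' p l = A p l" using i unfolding A'_def by auto
  qed
next
  case (Suc k)
  then obtain i where i: "i \<in> RL (Suc k)" "i \<noteq> j" "A i j = 0" "j < n" unfolding CL_def by auto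
  have iN: "i < n" using i RL_sub by auto
  show ?case
  proof (cases "i \<in> RL k")
    case True
    then have "j \<in> CL k" using i unfolding CL_def by auto
    from Suc.IH[OF this] obtain A' i0 where H: "i0 \<in> RL 0" "(\<forall>i<n. \<forall>j<n. A' i j \<le> 1)" "(\<forall>i<n. A' i i = 0)"
     "(\<forall>i<n. (\<Sum>l<n. A' i l) = rs i + (if i = i0 then 1 else 0))"
     "(\<forall>l<n. (\<Sum>i<n. A' i l) = cs l + (if l = j then 1 else 0))"
     "(\<forall>i<n. i \<notin> RL k \<longrightarrow> (\<forall>l<n. A' i l = A i l))" by blast
    have "RL k \<subseteq> RL (Suc k)" by (rule RL_mono) simp
    then show ?thesis using H by blast
  next
    case False
    from RL_Suc[OF i(1) False] obtain j' where j': "j' \<in> CL k" "A i j' = 1" by blast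
    have j'N: "j' < n" using j' unfolding CL_def by auto
    have jj: "j \<noteq> j'" using j' i by auto
    from Suc.IH[OF j'(1)] obtain A' i0 where H: "i0 \<in> RL 0" "(\<forall>i<n. \<forall>j<n. A' i j \<le> 1)" "(\<forall>i<n. A' i i = 0)"
     "(\<forall>i<n. (\<Sum>l<n. A' i l) = rs i + (if i = i0 then 1 else 0))"
     "(\<forall>l<n. (\<Sum>i<n. A' i l) = cs l + (if l = j' then 1 else 0))"
     "(\<forall>i<n. i \<notin> RL k \<longrightarrow> (\<forall>l<n. A' i l = A i l))" by blast
    have a1: "A' i j' = 1" "A' i j = 0" using H(6) iN False j' i j'N by auto
    define A'' where "A'' = (\<lambda>p q. if p = i \<and> q = j then 1 else if p = i \<and> q = j' then 0 else A' p q)"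
    have s: "A'' p q + (if q = j' then (if p = i then 1 else 0) else 0)
           = A' p q + (if q = j then (if p = i then 1 else 0) else 0)" for p q
      using a1 jj unfolding A''_def by auto
    have s2: "A'' p q + (if p = i then (if q = j' then 1 else 0) else 0)
           = A' p q + (if p = i then (if q = j then 1 else 0) else 0)" for p q
      using a1 jj unfolding A''_def by auto
    show ?thesis
    proof (intro exI[of _ A''] exI[of _ i0] conjI allI impI)
      show "i0 \<in> RL 0" by fact
    next
      fix p q assume "p < n" "q < n" then show "A'' p q \<le> 1" using H(2) unfolding A''_def by auto
    next
      fix p assume "p < n" then show "A'' p p = 0" using H(3) i unfolding A''_def by auto
    next
      fix p assume p: "p < n"
      have "(\<Sum>l<n. A'' p l) + (if p = i then 1 else 0) = (\<Sum>l<n. A' p l) + (if p = i then 1 else 0)"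
      proof -
        have "(\<Sum>l<n. A'' p l + (if p = i then (if l = j' then 1 else 0) else 0))
           = (\<Sum>l<n. A' p l + (if p = i then (if l = j then 1 else 0) else 0))"
          using s2[of p] by simp
        then show ?thesis using j'N i(4) by (cases "p = i") (simp_all add: sum.distrib)
      qed
      then show "(\<Sum>l<n. A'' p l) = rs p + (if p = i0 then 1 else 0)" using H(4) p by simp
    next
      fix l assume l: "l < n"
      have "(\<Sum>p<n. A'' p l) + (if l = j' then 1 else 0) = (\<Sum>p<n. A' p l) + (if l = j then 1 else 0)"
      proof -
        have "(\<Sum>p<n. A'' p l + (if l = j' then (if p = i then 1 else 0) else 0))
           = (\<Sum>p<n. A' p l + (if l = j then (if p = i then 1 else 0) else 0))"
          using s[of _ l] by simp
        then show ?thesis using iN by (cases "l = j"; cases "l = j'") (simp_all add: sum.distrib)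
      qed
      then show "(\<Sum>p<n. A'' p l) = cs l + (if l = j then 1 else 0)" using H(5) l by simp
    next
      fix p l assume "p < n" "p \<notin> RL (Suc k)" "l < n"
      moreover have "RL k \<subseteq> RL (Suc k)" by (rule RL_mono) simp
      moreover have "p \<noteq> i" using i(1) \<open>p \<notin> RL (Suc k)\<close> by blast
      ultimately show "A'' p l = A p l" using H(6) unfolding A''_def by auto
    qed
  qed
qed

end

lemma core:
  fixes n M S :: nat and a b :: "nat \<Rightarrow> nat"
  assumes Sa: "(\<Sum>i<n. a i) = S" and Sb: "(\<Sum>i<n. b i) = S"
    and aM: "\<forall>i<n. a i \<le> M" and bM: "\<forall>j<n. b j \<le> M" and MS: "M * (M + 1) \<le> S"
  shows "graphic n a b"
proof -
  define valid where "valid A \<longleftrightarrow> (\<forall>i<n. \<forall>j<n. A i j \<le> (1::nat)) \<and> (\<forall>i<n. A i i = 0)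
      \<and> (\<forall>i<n. (\<Sum>j<n. A i j) \<le> a i) \<and> (\<forall>j<n. (\<Sum>i<n. A i j) \<le> b j)" for A
  define tot where "tot A = (\<Sum>i<n. \<Sum>j<n. A i j)" for A :: "nat \<Rightarrow> nat \<Rightarrow> nat"
  have totle: "tot A \<le> S" if "valid A" for A
    using that unfolding valid_def tot_def Sa[symmetric] by (intro sum_mono) auto
  define V where "V = {t. \<exists>A. valid A \<and> tot A = t}"
  have finV: "finite V" by (rule finite_subset[of _ "{..S}"]) (auto simp: V_def totle)
  have "valid (\<lambda>_ _. 0)" unfolding valid_def by simp
  hence "tot (\<lambda>_ _. 0) \<in> V" unfolding V_def by blast
  hence neV: "V \<noteq> {}" by blast
  have "Max V \<in> V" using finV neV by simp
  then obtain A0 where A0: "valid A0" "tot A0 = Max V" unfolding V_def by blast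
  have full: "tot A0 = S"
  proof (rule ccontr)
    assume ne: "tot A0 \<noteq> S"
    hence lt: "tot A0 < S" using totle[OF A0(1)] by simp
    interpret aug n A0 a
      using A0(1) unfolding valid_def by unfold_locales auto
    have rsa: "rs i \<le> a i" if "i < n" for i using A0(1) that unfolding valid_def rs_def by auto
    have csb: "cs j \<le> b j" if "j < n" for j using A0(1) that unfolding valid_def cs_def by auto
    have tot_rs: "tot A0 = (\<Sum>i<n. rs i)" unfolding tot_def rs_def by simp
    obtain i0 where i0: "i0 < n" "rs i0 < a i0"
    proof (rule ccontr)
      assume "\<not> thesis"
      with that have "\<forall>i<n. a i \<le> rs i" by (meson not_less)
      hence "S \<le> tot A0" unfolding tot_rs Sa[symmetric] by (intro sum_mono) auto
      with lt show False by simp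
    qed
    have "\<exists>N. RL (Suc N) = RL N"
    proof (rule ccontr)
      assume "\<nexists>N. RL (Suc N) = RL N"
      hence st: "RL k \<subset> RL (Suc k)" for k using RL_mono[of k "Suc k"] by auto
      have "k \<le> card (RL k)" for k
      proof (induction k)
        case 0 show ?case by simp
      next
        case (Suc k)
        have "card (RL k) < card (RL (Suc k))"
          by (rule psubset_card_mono[OF finite_subset[OF RL_sub] st]) simp
        with Suc show ?case by simp
      qed
      moreover have "card (RL (Suc n)) \<le> n" using card_mono[OF _ RL_sub, of "Suc n"] by simp
      ultimately show False by (metis not_less_eq_eq)
    qed
    then obtain N where N: "RL (Suc N) = RL N" by blast
    define X where "X = RL N"
    define Y where "Y = CL N"
    define Z where "Z = {..<n} - Y"
    have XN: "X \<subseteq> {..<n}" unfolding X_def by (rule RL_sub)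
    have YN: "Y \<subseteq> {..<n}" unfolding Y_def CL_def by auto
    have i0X: "i0 \<in> X" using RL_mono[of 0 N] i0 unfolding X_def by auto
    have satY: "cs j = b j" if "j \<in> Y" for j
    proof (rule ccontr)
      assume "cs j \<noteq> b j"
      hence cj: "cs j < b j" using csb[of j] that YN by auto
      from path[of j N] that obtain A' i1 where H: "i1 \<in> RL 0" "(\<forall>i<n. \<forall>j<n. A' i j \<le> 1)" "(\<forall>i<n. A' i i = 0)"
       "(\<forall>i<n. (\<Sum>l<n. A' i l) = rs i + (if i = i1 then 1 else 0))"
       "(\<forall>l<n. (\<Sum>i<n. A' i l) = cs l + (if l = j then 1 else 0))"
        unfolding Y_def by blast
      have i1: "i1 < n" "rs i1 < a i1" using H(1) by auto
      have "valid A'" unfolding valid_def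
      proof (intro conjI allI impI)
        fix i assume "i < n" then show "(\<Sum>l<n. A' i l) \<le> a i" using H(4) rsa i1 by auto
      next
        fix l assume "l < n" then show "(\<Sum>i<n. A' i l) \<le> b l" using H(5) csb cj by auto
      qed (use H in auto)
      moreover have "tot A' = tot A0 + 1"
      proof -
        have "tot A' = (\<Sum>i<n. rs i + (if i = i1 then 1 else 0))" unfolding tot_def using H(4) by simp
        also have "\<dots> = tot A0 + 1" unfolding tot_rs sum.distrib using i1 by simp
        finally show ?thesis .
      qed
      ultimately have "tot A0 + 1 \<in> V" unfolding V_def by blast
      hence "tot A0 + 1 \<le> Max V" using finV by simp
      with A0(2) show False by simp
    qed
    have satX: "rs i = a i" if "i < n" "i \<notin> X" for i
      using that RL_mono[of 0 N] rsa[of i] unfolding X_def by auto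
    have fillZ: "A0 i j = 1" if "i \<in> X" "j \<in> Z" "i \<noteq> j" for i j
      using that ent[of i j] XN unfolding Z_def Y_def CL_def X_def by force
    have zeroY: "A0 i j = 0" if "j \<in> Y" "i < n" "i \<notin> X" for i j
    proof (rule ccontr)
      assume "A0 i j \<noteq> 0"
      hence "A0 i j = 1" using ent[of i j] that YN by auto
      hence "i \<in> RL (Suc N)" using that YN unfolding Y_def CL_def by auto
      with N that show False unfolding X_def by simp
    qed
    have finX: "finite X" using XN finite_subset by blast
    have finY: "finite Y" using YN finite_subset by blast
    have finZ: "finite Z" unfolding Z_def by simp
    have rowsplit: "rs i = (\<Sum>j\<in>Y. A0 i j) + (\<Sum>j\<in>Z. A0 i j)" for i
    proof -
      have "{..<n} = Y \<union> Z" "Y \<inter> Z = {}" using YN unfolding Z_def by auto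
      then show ?thesis unfolding rs_def using finY finZ by (simp add: sum.union_disjoint)
    qed
    have partY: "(\<Sum>i\<in>X. \<Sum>j\<in>Y. A0 i j) = (\<Sum>j\<in>Y. b j)"
    proof -
      have "(\<Sum>i\<in>X. \<Sum>j\<in>Y. A0 i j) = (\<Sum>j\<in>Y. \<Sum>i\<in>X. A0 i j)" by (rule sum.swap)
      also have "\<dots> = (\<Sum>j\<in>Y. cs j)"
      proof (rule sum.cong[OF refl])
        fix j assume j: "j \<in> Y"
        have "cs j = (\<Sum>i\<in>{..<n} - X. A0 i j) + (\<Sum>i\<in>X. A0 i j)"
          unfolding cs_def by (rule sum.subset_diff[OF XN]) simp
        moreover have "(\<Sum>i\<in>{..<n} - X. A0 i j) = 0" using zeroY[OF j] by simp
        ultimately show "(\<Sum>i\<in>X. A0 i j) = cs j" by simp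
      qed
      also have "\<dots> = (\<Sum>j\<in>Y. b j)" using satY by simp
      finally show ?thesis .
    qed
    have rowZ: "(\<Sum>j\<in>Z. A0 i j) = card (Z - {i})" if "i \<in> X" for i
    proof -
      have "(\<Sum>j\<in>Z. A0 i j) = (\<Sum>j\<in>Z - {i}. A0 i j)"
      proof (cases "i \<in> Z")
        case True
        then show ?thesis using sum.remove[OF finZ True, of "A0 i"] dg[of i] that XN by auto
      qed simp
      moreover have "(\<Sum>j\<in>Z - {i}. A0 i j) = (\<Sum>j\<in>Z - {i}. 1)" using fillZ that by simp
      ultimately show ?thesis by simp
    qed
    define w where "w = card (X \<inter> Z)"
    define P where "P = (\<Sum>i\<in>X. card (Z - {i}))"
    have Pw: "P + w = card X * card Z"
    proof -
      have "card (Z - {i}) + (if i \<in> Z then 1 else 0) = card Z" for i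
      proof (cases "i \<in> Z")
        case True
        then have "card Z > 0" using finZ card_gt_0_iff by blast
        then show ?thesis using True finZ by (simp add: card_Diff_singleton)
      qed simp
      hence "(\<Sum>i\<in>X. card (Z - {i}) + (if i \<in> Z then 1 else 0)) = card X * card Z" by simp
      moreover have "(\<Sum>i\<in>X. (if i \<in> Z then 1 else 0::nat)) = w"
        unfolding w_def using finX by (simp add: sum.If_cases Int_def)
      ultimately show ?thesis unfolding P_def sum.distrib by simp
    qed
    have SXr: "(\<Sum>i\<in>X. rs i) = (\<Sum>j\<in>Y. b j) + P"
      unfolding rowsplit sum.distrib partY P_def using rowZ by simp
    have SXa: "(\<Sum>i\<in>X. a i) \<ge> (\<Sum>j\<in>Y. b j) + P + 1"
    proof -
      have "(\<Sum>i\<in>X. rs i) < (\<Sum>i\<in>X. a i)"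
        using finX i0X i0 rsa XN by (intro sum_strict_mono_ex1) auto
      with SXr show ?thesis by simp
    qed
    have "(\<Sum>i\<in>X. a i) \<le> card X * M"
      using sum_mono[of X a "\<lambda>_. M"] aM XN by auto
    moreover have "(\<Sum>i\<in>X. a i) \<le> S"
      unfolding Sa[symmetric] using XN by (intro sum_mono2) auto
    moreover have "(\<Sum>j\<in>Y. b j) + (\<Sum>j\<in>Z. b j) = S"
    proof -
      have "{..<n} = Y \<union> Z" "Y \<inter> Z = {}" using YN unfolding Z_def by auto
      then show ?thesis unfolding Sb[symmetric] using finY finZ by (simp add: sum.union_disjoint)
    qed
    moreover have "(\<Sum>j\<in>Z. b j) \<le> card Z * M"
      using sum_mono[of Z b "\<lambda>_. M"] bM unfolding Z_def by auto
    moreover have "w \<le> card X" "w \<le> card Z" unfolding w_def using finX finZ by (simp_all add: card_mono)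
    ultimately show False using arith_contra[OF SXa Pw] MS by blast
  qed
  have rowsum: "(\<Sum>j<n. A0 i j) = a i" if "i < n" for i
  proof (rule sum_mono_inv[of "\<lambda>i. \<Sum>j<n. A0 i j" "{..<n}" a])
    show "(\<Sum>i<n. \<Sum>j<n. A0 i j) = sum a {..<n}" using full Sa unfolding tot_def by simp
  qed (use A0(1) that in \<open>auto simp: valid_def\<close>)
  have colsum: "(\<Sum>i<n. A0 i j) = b j" if "j < n" for j
  proof (rule sum_mono_inv[of "\<lambda>j. \<Sum>i<n. A0 i j" "{..<n}" b])
    show "(\<Sum>j<n. \<Sum>i<n. A0 i j) = sum b {..<n}" 
    proof -
      have "(\<Sum>j<n. \<Sum>i<n. A0 i j) = tot A0" unfolding tot_def by (rule sum.swap)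
      then show ?thesis using full Sb by simp
    qed
  qed (use A0(1) that in \<open>auto simp: valid_def\<close>)
  have "\<forall>i<n. \<forall>j<n. A0 i j \<in> {0, 1}" using A0(1) unfolding valid_def by (auto simp: le_Suc_eq)
  then show ?thesis unfolding graphic_def using A0(1) rowsum colsum unfolding valid_def by blast
qed

theorem corollary3:
  fixes n :: nat and a b :: "nat \<Rightarrow> nat"
  assumes sums: "(\<Sum>i<n. a i) = (\<Sum>i<n. b i)"
    and M_lt: "max_bideg n a b < n"
  shows "(max_bideg n a b < card {i. i < n \<and> a i = max_bideg n a b} \<longrightarrow> graphic n a b)
       \<and> (\<forall>k::nat. max_bideg n a b < k \<and> max_bideg n a b * k \<le> (\<Sum>i<n. a i) \<longrightarrow> graphic n a b)"
proof -
  define M where "M = max_bideg n a b"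
  define S where "S = (\<Sum>i<n. a i)"
  have fin: "finite (a ` {..<n} \<union> b ` {..<n})" by simp
  have aM: "\<forall>i<n. a i \<le> M" unfolding M_def max_bideg_def using fin by (auto intro: Max_ge)
  have bM: "\<forall>j<n. b j \<le> M" unfolding M_def max_bideg_def using fin by (auto intro: Max_ge)
  have Sa: "(\<Sum>i<n. a i) = S" and Sb: "(\<Sum>i<n. b i) = S" using sums unfolding S_def by simp_all
  have ii: "\<forall>k::nat. M < k \<and> M * k \<le> S \<longrightarrow> graphic n a b"
  proof (intro allI impI)
    fix k :: nat assume k: "M < k \<and> M * k \<le> S"
    have "M * (M + 1) \<le> M * k" using k by (intro mult_left_mono) auto
    with k have "M * (M + 1) \<le> S" by linarith
    then show "graphic n a b" by (rule core[OF Sa Sb aM bM])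
  qed
  have i: "M < card {i. i < n \<and> a i = M} \<longrightarrow> graphic n a b"
  proof
    define K where "K = {i. i < n \<and> a i = M}"
    assume c: "M < card {i. i < n \<and> a i = M}"
    have KN: "K \<subseteq> {..<n}" unfolding K_def by auto
    have "(\<Sum>i\<in>K. a i) = card K * M" unfolding K_def by simp
    moreover have "(\<Sum>i\<in>K. a i) \<le> S" unfolding S_def using KN by (intro sum_mono2) auto
    moreover have "(M + 1) * M \<le> card K * M" using c unfolding K_def by (intro mult_right_mono) auto
    ultimately have "(M + 1) * M \<le> S" by linarith
    then have "M * (M + 1) \<le> S" by (simp add: mult.commute)
    then show "graphic n a b" using ii by (meson less_add_one order_refl)
  qed
  show ?thesis using i ii unfolding M_def S_def by blast
qed

end
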